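(* Let $(X,\tau)$ be a topological space, $\delta$ a quasi-proximity on $X$ compatible with $\tau$ such that $\mathcal{V}_\delta$ is transitive, and $\mathcal{B}=\mathcal{B}(\mathcal{V}_\delta)$. Let $\{U_i:i\in I\}$ be a nonempty family of transitive relations on $X$ containing the diagonal, closed under finite intersections, and let $\mathcal{V}$ be the filter on $X\times X$ generated by $\mathcal{V}_\delta\cup\{U_i:i\in I\}$. Then $\mathcal{V}\in\pi(\delta)$ if and only if $U_i(A)\in\mathcal{B}$ for every $i\in I$ and every $A\subseteq X$.
   Context: Quasi-uniformities and quasi-proximities are in the sense of Fletcher–Lindgren; $\delta$ compatible with $\tau$ means $\tau(\delta)=\tau$. For a quasi-proximity $\delta$, $\pi(\delta)$ is the set of quasi-uniformities $\mathcal{V}$ with $\delta(\mathcal{V})=\delta$, and $\mathcal{V}_\delta$ is its coarsest element (totally bounded). A quasi-uniformity is transitive if it has a base of transitive entourages. For $U\subseteq X\times X$, $U(x)=\{y:(x,y)\in U\}$ and $U(A)=\bigcup_{a\in A}U(a)$. For $N\subseteq X$, $U_N=(N\times N)\cup((X\setminus N)\times X)$, and $\mathcal{B}(\mathcal{W})=\{N\in\tau:U_N\in\mathcal{W}\}$; for $\mathcal{W}=\mathcal{V}_\delta$ transitive this is an l-base (a base of $\tau$ closed under finite unions and intersections containing $\emptyset,X$). *)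

theory Defs
  imports "HOL-Analysis.Analysis"
begin

text \<open>The ground set X is the whole type 'a. A binary relation delta on subsets of X
  is written as a curried predicate.\<close>

definition quasi_proximity :: "('a set \<Rightarrow> 'a set \<Rightarrow> bool) \<Rightarrow> bool" where
  "quasi_proximity \<delta> \<longleftrightarrow>
     \<not> \<delta> UNIV {} \<and> \<not> \<delta> {} UNIV \<and>
     (\<forall>A B C. \<delta> C (A \<union> B) \<longleftrightarrow> \<delta> C A \<or> \<delta> C B) \<and>
     (\<forall>A B C. \<delta> (A \<union> B) C \<longleftrightarrow> \<delta> A C \<or> \<delta> B C) \<and>
     (\<forall>x. \<delta> {x} {x}) \<and>
     (\<forall>A B. \<not> \<delta> A B \<longrightarrow> (\<exists>C. \<not> \<delta> A C \<and> \<not> \<delta> (- C) B))"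

definition qp_open :: "('a set \<Rightarrow> 'a set \<Rightarrow> bool) \<Rightarrow> 'a set \<Rightarrow> bool" where
  "qp_open \<delta> G \<longleftrightarrow> (\<forall>x\<in>G. \<not> \<delta> {x} (- G))"

definition qp_compatible :: "('a set \<Rightarrow> 'a set \<Rightarrow> bool) \<Rightarrow> 'a topology \<Rightarrow> bool" where
  "qp_compatible \<delta> \<tau> \<longleftrightarrow> (\<forall>G. openin \<tau> G \<longleftrightarrow> qp_open \<delta> G)"

definition gen_filter :: "('a \<times> 'a) set set \<Rightarrow> ('a \<times> 'a) set set" where
  "gen_filter S = {W. \<exists>F. finite F \<and> F \<subseteq> S \<and> \<Inter>F \<subseteq> W}"

definition is_filter :: "('a \<times> 'a) set set \<Rightarrow> bool" where
  "is_filter \<V> \<longleftrightarrow> \<V> \<noteq> {} \<and>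
     (\<forall>U\<in>\<V>. \<forall>W. U \<subseteq> W \<longrightarrow> W \<in> \<V>) \<and>
     (\<forall>U\<in>\<V>. \<forall>W\<in>\<V>. U \<inter> W \<in> \<V>)"

definition quasi_uniformity :: "('a \<times> 'a) set set \<Rightarrow> bool" where
  "quasi_uniformity \<V> \<longleftrightarrow> is_filter \<V> \<and>
     (\<forall>U\<in>\<V>. Id \<subseteq> U) \<and>
     (\<forall>U\<in>\<V>. \<exists>W\<in>\<V>. W O W \<subseteq> U)"

definition qprox_of :: "('a \<times> 'a) set set \<Rightarrow> 'a set \<Rightarrow> 'a set \<Rightarrow> bool" where
  "qprox_of \<V> A B \<longleftrightarrow> (\<forall>U\<in>\<V>. U `` A \<inter> B \<noteq> {})"

definition pi_class :: "('a set \<Rightarrow> 'a set \<Rightarrow> bool) \<Rightarrow> ('a \<times> 'a) set set set" where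
  "pi_class \<delta> = {\<V>. quasi_uniformity \<V> \<and> qprox_of \<V> = \<delta>}"

definition V_delta :: "('a set \<Rightarrow> 'a set \<Rightarrow> bool) \<Rightarrow> ('a \<times> 'a) set set" where
  "V_delta \<delta> = (THE \<W>. \<W> \<in> pi_class \<delta> \<and> (\<forall>\<V>\<in>pi_class \<delta>. \<W> \<subseteq> \<V>))"

definition transitive_qu :: "('a \<times> 'a) set set \<Rightarrow> bool" where
  "transitive_qu \<V> \<longleftrightarrow> (\<forall>U\<in>\<V>. \<exists>W\<in>\<V>. trans W \<and> W \<subseteq> U)"

definition U_N :: "'a set \<Rightarrow> ('a \<times> 'a) set" where
  "U_N N = (N \<times> N) \<union> ((- N) \<times> UNIV)"

definition B_of :: "'a topology \<Rightarrow> ('a \<times> 'a) set set \<Rightarrow> 'a set set" where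
  "B_of \<tau> \<W> = {N. openin \<tau> N \<and> U_N N \<in> \<W>}"

end

theory Submission
  imports Defs
begin

definition Upair :: "'a set \<Rightarrow> 'a set \<Rightarrow> ('a \<times> 'a) set" where
  "Upair A B = ((- A) \<times> UNIV) \<union> (UNIV \<times> (- B))"

definition SB :: "('a set \<Rightarrow> 'a set \<Rightarrow> bool) \<Rightarrow> ('a \<times> 'a) set set" where
  "SB \<delta> = (\<lambda>p. Upair (fst p) (snd p)) ` {p. \<not> \<delta> (fst p) (snd p)}"

lemma qp_mono_r: "quasi_proximity \<delta> \<Longrightarrow> \<delta> A B \<Longrightarrow> B \<subseteq> B' \<Longrightarrow> \<delta> A B'"
proof -
  assume q: "quasi_proximity \<delta>" and d: "\<delta> A B" and s: "B \<subseteq> B'"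
  have "B' = B \<union> B'" using s by blast
  moreover have "\<delta> A (B \<union> B') \<longleftrightarrow> \<delta> A B \<or> \<delta> A B'" using q unfolding quasi_proximity_def by blast
  ultimately show ?thesis using d by simp
qed

lemma qp_mono_l: "quasi_proximity \<delta> \<Longrightarrow> \<delta> A B \<Longrightarrow> A \<subseteq> A' \<Longrightarrow> \<delta> A' B"
proof -
  assume q: "quasi_proximity \<delta>" and d: "\<delta> A B" and s: "A \<subseteq> A'"
  have "A' = A \<union> A'" using s by blast
  moreover have "\<delta> (A \<union> A') B \<longleftrightarrow> \<delta> A B \<or> \<delta> A' B" using q unfolding quasi_proximity_def by blast
  ultimately show ?thesis using d by simp
qed

lemma qp_empty_r: "quasi_proximity \<delta> \<Longrightarrow> \<not> \<delta> A {}"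
  using qp_mono_l[of \<delta> A "{}" UNIV] unfolding quasi_proximity_def by blast

lemma qp_empty_l: "quasi_proximity \<delta> \<Longrightarrow> \<not> \<delta> {} B"
  using qp_mono_r[of \<delta> "{}" B UNIV] unfolding quasi_proximity_def by blast

lemma qp_inter: "quasi_proximity \<delta> \<Longrightarrow> x \<in> A \<Longrightarrow> x \<in> B \<Longrightarrow> \<delta> A B"
proof -
  assume q: "quasi_proximity \<delta>" and x: "x \<in> A" "x \<in> B"
  have "\<delta> {x} {x}" using q unfolding quasi_proximity_def by blast
  then have "\<delta> A {x}" using qp_mono_l[OF q] x by blast
  then show ?thesis using qp_mono_r[OF q] x by blast
qed

lemma qp_union_r: "quasi_proximity \<delta> \<Longrightarrow> \<not> \<delta> A B \<Longrightarrow> \<not> \<delta> A C \<Longrightarrow> \<not> \<delta> A (B \<union> C)"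
  unfolding quasi_proximity_def by blast

lemma qp_union_l: "quasi_proximity \<delta> \<Longrightarrow> \<not> \<delta> A C \<Longrightarrow> \<not> \<delta> B C \<Longrightarrow> \<not> \<delta> (A \<union> B) C"
  unfolding quasi_proximity_def by blast

lemma qp_Union_r:
  assumes "quasi_proximity \<delta>" "finite K" "\<forall>k\<in>K. \<not> \<delta> A (f k)"
  shows "\<not> \<delta> A (\<Union>k\<in>K. f k)"
  using assms(2,3)
proof (induction K rule: finite_induct)
  case empty then show ?case using qp_empty_r[OF assms(1)] by simp
next
  case (insert x F) then show ?case using qp_union_r[OF assms(1)] by simp
qed

lemma qp_Union_l:
  assumes "quasi_proximity \<delta>" "finite K" "\<forall>k\<in>K. \<not> \<delta> (f k) B"
  shows "\<not> \<delta> (\<Union>k\<in>K. f k) B"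
  using assms(2,3)
proof (induction K rule: finite_induct)
  case empty then show ?case using qp_empty_l[OF assms(1)] by simp
next
  case (insert x F) then show ?case using qp_union_l[OF assms(1)] by simp
qed

lemma keyL:
  assumes qp: "quasi_proximity \<delta>" and fin: "finite P"
    and P: "\<forall>p\<in>P. \<not> \<delta> (fst p) (snd p)"
    and H: "\<forall>A'. \<not> \<delta> A' (- (R `` A'))"
    and E: "((\<Inter>p\<in>P. Upair (fst p) (snd p)) \<inter> R) `` A \<inter> B = {}"
  shows "\<not> \<delta> A B"
proof -
  define AJ where "AJ J = {a\<in>A. {p\<in>P. a \<in> fst p} = J}" for J
  have Aeq: "A = (\<Union>J\<in>Pow P. AJ J)"
  proof
    show "A \<subseteq> (\<Union>J\<in>Pow P. AJ J)"
    proof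
      fix a assume "a \<in> A"
      then have "a \<in> AJ {p\<in>P. a \<in> fst p}" unfolding AJ_def by simp
      moreover have "{p\<in>P. a \<in> fst p} \<in> Pow P" by blast
      ultimately show "a \<in> (\<Union>J\<in>Pow P. AJ J)" by blast
    qed
  qed (auto simp: AJ_def)
  have "\<not> \<delta> (AJ J) B" if J: "J \<in> Pow P" for J
  proof -
    have sub: "B \<subseteq> - (R `` AJ J) \<union> (\<Union>p\<in>J. snd p)"
    proof
      fix b assume b: "b \<in> B"
      show "b \<in> - (R `` AJ J) \<union> (\<Union>p\<in>J. snd p)"
      proof (rule ccontr)
        assume "\<not> ?thesis"
        then obtain a where a: "a \<in> AJ J" "(a, b) \<in> R" and nb: "\<forall>p\<in>J. b \<notin> snd p" by auto
        have aJ: "J = {p\<in>P. a \<in> fst p}" using a(1) unfolding AJ_def by simp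
        have "(a, b) \<in> Upair (fst p) (snd p)" if "p \<in> P" for p
        proof (cases "p \<in> J")
          case True then show ?thesis using nb unfolding Upair_def by simp
        next
          case False then show ?thesis using aJ that unfolding Upair_def by simp
        qed
        then have "(a, b) \<in> (\<Inter>p\<in>P. Upair (fst p) (snd p)) \<inter> R"
          using a by blast
        moreover have "a \<in> A" using a unfolding AJ_def by auto
        ultimately have "b \<in> ((\<Inter>p\<in>P. Upair (fst p) (snd p)) \<inter> R) `` A"
          by blast
        with b E show False by auto
      qed
    qed
    have fJ: "finite J" using J fin finite_subset by auto
    have "\<forall>p\<in>J. \<not> \<delta> (AJ J) (snd p)"
    proof
      fix p assume p: "p \<in> J"
      then have "AJ J \<subseteq> fst p" unfolding AJ_def by auto
      moreover have "\<not> \<delta> (fst p) (snd p)" using p J P by auto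
      ultimately show "\<not> \<delta> (AJ J) (snd p)" using qp_mono_l[OF qp] by blast
    qed
    then have "\<not> \<delta> (AJ J) (\<Union>p\<in>J. snd p)" using qp_Union_r[OF qp fJ] by blast
    then have "\<not> \<delta> (AJ J) (- (R `` AJ J) \<union> (\<Union>p\<in>J. snd p))"
      using qp_union_r[OF qp] H by blast
    then show ?thesis using qp_mono_r[OF qp] sub by blast
  qed
  then have "\<not> \<delta> (\<Union>J\<in>Pow P. AJ J) B" using qp_Union_l[OF qp] fin by blast
  then show ?thesis using Aeq by simp
qed


lemma gf_filter: "is_filter (gen_filter S)"
  unfolding is_filter_def gen_filter_def
proof (intro conjI ballI allI impI)
  show "{W. \<exists>F. finite F \<and> F \<subseteq> S \<and> \<Inter> F \<subseteq> W} \<noteq> {}"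
  proof -
    have "UNIV \<in> {W. \<exists>F. finite F \<and> F \<subseteq> S \<and> \<Inter> F \<subseteq> W}"
      by (intro CollectI exI[of _ "{}"]) simp
    then show ?thesis by blast
  qed
next
  fix U W assume "U \<in> {W. \<exists>F. finite F \<and> F \<subseteq> S \<and> \<Inter> F \<subseteq> W}" "U \<subseteq> W"
  then show "W \<in> {W. \<exists>F. finite F \<and> F \<subseteq> S \<and> \<Inter> F \<subseteq> W}" by blast
next
  fix U W assume "U \<in> {W. \<exists>F. finite F \<and> F \<subseteq> S \<and> \<Inter> F \<subseteq> W}"
    "W \<in> {W. \<exists>F. finite F \<and> F \<subseteq> S \<and> \<Inter> F \<subseteq> W}"
  then obtain F1 F2 where "finite F1" "F1 \<subseteq> S" "\<Inter>F1 \<subseteq> U" "finite F2" "F2 \<subseteq> S" "\<Inter>F2 \<subseteq> W"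
    by blast
  then show "U \<inter> W \<in> {W. \<exists>F. finite F \<and> F \<subseteq> S \<and> \<Inter> F \<subseteq> W}"
    by (intro CollectI exI[of _ "F1 \<union> F2"]) auto
qed

lemma gf_gen: "s \<in> S \<Longrightarrow> s \<in> gen_filter S"
  unfolding gen_filter_def by (intro CollectI exI[of _ "{s}"]) auto

lemma gfE: "U \<in> gen_filter S \<Longrightarrow> (\<And>F. finite F \<Longrightarrow> F \<subseteq> S \<Longrightarrow> \<Inter>F \<subseteq> U \<Longrightarrow> P) \<Longrightarrow> P"
  unfolding gen_filter_def by blast

lemma filter_Inter:
  assumes f: "is_filter V" and fin: "finite K" and K: "\<forall>k\<in>K. g k \<in> V"
  shows "(\<Inter>k\<in>K. g k) \<in> V"
  using fin K
proof (induction K rule: finite_induct)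
  case empty
  have "V \<noteq> {}" using f unfolding is_filter_def by simp
  then obtain u where "u \<in> V" by blast
  have "u \<subseteq> UNIV" by simp
  then have "UNIV \<in> V" using f \<open>u \<in> V\<close> unfolding is_filter_def by blast
  then show ?case by simp
next
  case (insert x F) then show ?case using f unfolding is_filter_def by simp
qed

lemma filter_up: "is_filter V \<Longrightarrow> U \<in> V \<Longrightarrow> U \<subseteq> W \<Longrightarrow> W \<in> V"
  unfolding is_filter_def by blast

lemma gf_least: assumes "is_filter V" "S \<subseteq> V" shows "gen_filter S \<subseteq> V"
proof
  fix U assume "U \<in> gen_filter S"
  then obtain F where F: "finite F" "F \<subseteq> S" "\<Inter>F \<subseteq> U" by (rule gfE)
  have "\<forall>k\<in>F. k \<in> V" using F(2) assms(2) by blast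
  then have "(\<Inter>k\<in>F. k) \<in> V" by (rule filter_Inter[OF assms(1) F(1)])
  then have "\<Inter>F \<in> V" by simp
  then show "U \<in> V" using F(3) by (rule filter_up[OF assms(1)])
qed

lemma gf_Id: "\<forall>s\<in>S. Id \<subseteq> s \<Longrightarrow> U \<in> gen_filter S \<Longrightarrow> Id \<subseteq> U"
proof (erule gfE)
  fix F assume "\<forall>s\<in>S. Id \<subseteq> s" "finite F" "F \<subseteq> S" "\<Inter> F \<subseteq> U"
  then have "Id \<subseteq> \<Inter>F" by (intro Inter_greatest) blast
  then show "Id \<subseteq> U" using \<open>\<Inter> F \<subseteq> U\<close> by (rule order_trans)
qed

lemma gf_sqrt:
  assumes "\<forall>s\<in>S. \<exists>w\<in>gen_filter S. w O w \<subseteq> s" and "U \<in> gen_filter S"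
  shows "\<exists>w\<in>gen_filter S. w O w \<subseteq> U"
proof -
  obtain F where F: "finite F" "F \<subseteq> S" "\<Inter>F \<subseteq> U" using assms(2) by (rule gfE)
  define g where "g s = (SOME w. w \<in> gen_filter S \<and> w O w \<subseteq> s)" for s
  have g: "g s \<in> gen_filter S \<and> g s O g s \<subseteq> s" if "s \<in> F" for s
    unfolding g_def by (rule someI_ex) (use assms(1) F(2) that in blast)
  have "\<forall>s\<in>F. g s \<in> gen_filter S" using g by simp
  then have "(\<Inter>s\<in>F. g s) \<in> gen_filter S" by (rule filter_Inter[OF gf_filter F(1)])
  moreover have "(\<Inter>s\<in>F. g s) O (\<Inter>s\<in>F. g s) \<subseteq> U"
  proof -
    have "(\<Inter>s\<in>F. g s) O (\<Inter>s\<in>F. g s) \<subseteq> s" if "s \<in> F" for s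
    proof -
      have sub: "(\<Inter>s\<in>F. g s) \<subseteq> g s" by (rule INF_lower[OF that])
      have "(\<Inter>s\<in>F. g s) O (\<Inter>s\<in>F. g s) \<subseteq> g s O g s" by (rule relcomp_mono[OF sub sub])
      then show ?thesis using g[OF that] by blast
    qed
    then have "(\<Inter>s\<in>F. g s) O (\<Inter>s\<in>F. g s) \<subseteq> \<Inter>F" by (intro Inter_greatest)
    then show ?thesis using F(3) by (rule order_trans)
  qed
  ultimately show ?thesis by blast
qed

definition W0 :: "('a set \<Rightarrow> 'a set \<Rightarrow> bool) \<Rightarrow> ('a \<times> 'a) set set" where
  "W0 \<delta> = gen_filter (SB \<delta>)"

lemma SB_gen: "\<not> \<delta> A B \<Longrightarrow> Upair A B \<in> W0 \<delta>"
  unfolding W0_def SB_def by (rule gf_gen) (rule image_eqI[of _ _ "(A, B)"], auto)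

lemma W0E:
  assumes "U \<in> W0 \<delta>"
  obtains P where "finite P" "\<forall>p\<in>P. \<not> \<delta> (fst p) (snd p)" "(\<Inter>p\<in>P. Upair (fst p) (snd p)) \<subseteq> U"
proof -
  obtain F where F: "finite F" "F \<subseteq> SB \<delta>" "\<Inter>F \<subseteq> U" using assms unfolding W0_def by (rule gfE)
  then obtain P where P: "P \<subseteq> {p. \<not> \<delta> (fst p) (snd p)}" "finite P"
     "F = (\<lambda>p. Upair (fst p) (snd p)) ` P"
    unfolding SB_def by (meson finite_subset_image)
  show ?thesis using that[of P] P F by auto
qed

lemma W0_pi: assumes qp: "quasi_proximity \<delta>" shows "W0 \<delta> \<in> pi_class \<delta>"
proof -
  have Id: "\<forall>s\<in>SB \<delta>. Id \<subseteq> s"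
  proof
    fix s assume "s \<in> SB \<delta>"
    then obtain A B where s: "s = Upair A B" "\<not> \<delta> A B" unfolding SB_def by auto
    then show "Id \<subseteq> s" using qp_inter[OF qp] unfolding Upair_def by blast
  qed
  have sq: "\<forall>s\<in>SB \<delta>. \<exists>w\<in>gen_filter (SB \<delta>). w O w \<subseteq> s"
  proof
    fix s assume "s \<in> SB \<delta>"
    then obtain A B where s: "s = Upair A B" "\<not> \<delta> A B" unfolding SB_def by auto
    then obtain C where C: "\<not> \<delta> A C" "\<not> \<delta> (- C) B" using qp unfolding quasi_proximity_def by blast
    have "Upair A C \<inter> Upair (- C) B \<in> gen_filter (SB \<delta>)"
      using SB_gen[of \<delta>, OF C(1)] SB_gen[of \<delta>, OF C(2)] gf_filter unfolding W0_def is_filter_def by blast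
    moreover have "(Upair A C \<inter> Upair (- C) B) O (Upair A C \<inter> Upair (- C) B) \<subseteq> s"
    proof -
      have "(x, z) \<in> Upair A B" if "(x, y) \<in> Upair A C" "(y, z) \<in> Upair (- C) B" for x y z
        using that unfolding Upair_def by auto
      then show ?thesis unfolding s by blast
    qed
    ultimately show "\<exists>w\<in>gen_filter (SB \<delta>). w O w \<subseteq> s" by blast
  qed
  have qu: "quasi_uniformity (W0 \<delta>)"
    unfolding quasi_uniformity_def W0_def using gf_filter gf_Id[OF Id] gf_sqrt[OF sq] by blast
  have "qprox_of (W0 \<delta>) A B = \<delta> A B" for A B
  proof
    assume q: "qprox_of (W0 \<delta>) A B"
    show "\<delta> A B"
    proof (rule ccontr)
      assume "\<not> \<delta> A B"
      then have "Upair A B \<in> W0 \<delta>" by (rule SB_gen)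
      moreover have "Upair A B `` A \<inter> B = {}" unfolding Upair_def by auto
      ultimately show False using q unfolding qprox_of_def by blast
    qed
  next
    assume d: "\<delta> A B"
    show "qprox_of (W0 \<delta>) A B" unfolding qprox_of_def
    proof (intro ballI notI)
      fix U assume U: "U \<in> W0 \<delta>" and E: "U `` A \<inter> B = {}"
      obtain P where P: "finite P" "\<forall>p\<in>P. \<not> \<delta> (fst p) (snd p)" "(\<Inter>p\<in>P. Upair (fst p) (snd p)) \<subseteq> U"
        using U by (rule W0E)
      have H: "\<forall>A'. \<not> \<delta> A' (- (UNIV `` A'))"
      proof
        fix A' :: "'a set"
        show "\<not> \<delta> A' (- (UNIV `` A'))"
        proof (cases "A' = {}")
          case True then show ?thesis using qp_empty_l[OF qp] by simp
        next
          case False then have eq: "- (UNIV `` A') = {}" by auto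
          show ?thesis unfolding eq by (rule qp_empty_r[OF qp])
        qed
      qed
      have "((\<Inter>p\<in>P. Upair (fst p) (snd p)) \<inter> UNIV) `` A \<inter> B = {}" using E P(3) by blast
      then have "\<not> \<delta> A B" using keyL[OF qp P(1,2) H] by blast
      with d show False by simp
    qed
  qed
  then have "qprox_of (W0 \<delta>) = \<delta>" by (intro ext) simp
  then show ?thesis using qu unfolding pi_class_def by simp
qed

lemma W0_least: assumes "V \<in> pi_class \<delta>" shows "W0 \<delta> \<subseteq> V"
  unfolding W0_def
proof (rule gf_least)
  show "is_filter V" using assms unfolding pi_class_def quasi_uniformity_def by simp
  show "SB \<delta> \<subseteq> V"
  proof
    fix s assume "s \<in> SB \<delta>"
    then obtain A B where s: "s = Upair A B" "\<not> \<delta> A B" unfolding SB_def by auto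
    then have "\<not> qprox_of V A B" using assms unfolding pi_class_def by simp
    then obtain U where U: "U \<in> V" "U `` A \<inter> B = {}" unfolding qprox_of_def by blast
    then have "U \<subseteq> Upair A B" unfolding Upair_def by auto
    then show "s \<in> V" using filter_up[OF \<open>is_filter V\<close> U(1)] s by simp
  qed
qed

lemma V_delta_eq: assumes qp: "quasi_proximity \<delta>" shows "V_delta \<delta> = W0 \<delta>"
  unfolding V_delta_def
proof (rule the_equality)
  show "W0 \<delta> \<in> pi_class \<delta> \<and> (\<forall>\<V>\<in>pi_class \<delta>. W0 \<delta> \<subseteq> \<V>)" using W0_pi[OF qp] W0_least by blast
next
  fix W assume "W \<in> pi_class \<delta> \<and> (\<forall>\<V>\<in>pi_class \<delta>. W \<subseteq> \<V>)"
  then show "W = W0 \<delta>" using W0_pi[OF qp] W0_least by blast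
qed


lemma H_UNIV: assumes qp: "quasi_proximity \<delta>" shows "\<forall>A'. \<not> \<delta> A' (- (UNIV `` A'))"
proof
  fix A' :: "'a set"
  show "\<not> \<delta> A' (- (UNIV `` A'))"
  proof (cases "A' = {}")
    case True then show ?thesis using qp_empty_l[OF qp] by simp
  next
    case False then have eq: "- (UNIV `` A') = {}" by auto
    show ?thesis unfolding eq by (rule qp_empty_r[OF qp])
  qed
qed

lemma U_inter_closed:
  assumes fin: "finite K" and ne: "K \<noteq> {}" and KI: "K \<subseteq> I"
    and cl: "\<forall>i\<in>I. \<forall>j\<in>I. \<exists>k\<in>I. U k = U i \<inter> U j"
  shows "\<exists>k\<in>I. U k = (\<Inter>i\<in>K. U i)"
  using fin ne KI
proof (induction K rule: finite_ne_induct)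
  case (singleton x) then show ?case by auto
next
  case (insert x F)
  then obtain k where k: "k \<in> I" "U k = (\<Inter>i\<in>F. U i)" by auto
  then obtain m where "m \<in> I" "U m = U x \<inter> U k" using cl insert.prems by blast
  then show ?case using k by auto
qed

lemma UN_eq: "U_N N = Upair N (- N)"
  unfolding U_N_def Upair_def by auto

theorem proposition2p4:
  fixes \<tau> :: "'a topology" and \<delta> :: "'a set \<Rightarrow> 'a set \<Rightarrow> bool"
    and I :: "'i set" and U :: "'i \<Rightarrow> ('a \<times> 'a) set"
  assumes "topspace \<tau> = UNIV"
    and "quasi_proximity \<delta>"
    and "qp_compatible \<delta> \<tau>"
    and "transitive_qu (V_delta \<delta>)"
    and "I \<noteq> {}"
    and "\<forall>i\<in>I. trans (U i) \<and> Id \<subseteq> U i"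
    and "\<forall>i\<in>I. \<forall>j\<in>I. \<exists>k\<in>I. U k = U i \<inter> U j"
  shows "gen_filter (V_delta \<delta> \<union> U ` I) \<in> pi_class \<delta> \<longleftrightarrow>
         (\<forall>i\<in>I. \<forall>A. U i `` A \<in> B_of \<tau> (V_delta \<delta>))"
proof -
  note qp = assms(2)
  have Weq: "V_delta \<delta> = W0 \<delta>" by (rule V_delta_eq[OF qp])
  have Wpi: "W0 \<delta> \<in> pi_class \<delta>" by (rule W0_pi[OF qp])
  then have Wqu: "quasi_uniformity (W0 \<delta>)" and Wqp: "qprox_of (W0 \<delta>) = \<delta>"
    unfolding pi_class_def by auto
  have Wfil: "is_filter (W0 \<delta>)" using Wqu unfolding quasi_uniformity_def by simp
  define V where "V = gen_filter (W0 \<delta> \<union> U ` I)"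
  have WV: "W0 \<delta> \<subseteq> V" unfolding V_def by (rule subsetI, rule gf_gen, rule UnI1)
  have UV: "U i \<in> V" if "i \<in> I" for i unfolding V_def
    by (rule gf_gen, rule UnI2, rule imageI, rule that)
  have Vfil: "is_filter V" unfolding V_def by (rule gf_filter)
  show ?thesis unfolding Weq V_def[symmetric]
  proof
    assume hV: "V \<in> pi_class \<delta>"
    then have Vqp: "qprox_of V = \<delta>" unfolding pi_class_def by simp
    show "\<forall>i\<in>I. \<forall>A. U i `` A \<in> B_of \<tau> (W0 \<delta>)"
    proof (intro ballI allI)
      fix i A assume i: "i \<in> I"
      define N where "N = U i `` A"
      have tr: "trans (U i)" using assms(6) i by blast
      have NN: "U i `` N \<subseteq> N" unfolding N_def
      proof
        fix x assume "x \<in> U i `` (U i `` A)"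
        then obtain y a where "a \<in> A" "(a, y) \<in> U i" "(y, x) \<in> U i" by blast
        moreover then have "(a, x) \<in> U i" using tr unfolding trans_def by blast
        ultimately show "x \<in> U i `` A" by blast
      qed
      have clo: "\<not> \<delta> Y (- N)" if "Y \<subseteq> N" for Y
      proof
        assume "\<delta> Y (- N)"
        then have "qprox_of V Y (- N)" using Vqp by simp
        then have "U i `` Y \<inter> - N \<noteq> {}" using UV[OF i] unfolding qprox_of_def by blast
        moreover have "U i `` Y \<subseteq> N" using Image_mono[OF order_refl that, of "U i"] NN by blast
        ultimately show False by blast
      qed
      have "qp_open \<delta> N" unfolding qp_open_def using clo by blast
      then have "openin \<tau> N" using assms(3) unfolding qp_compatible_def by blast
      moreover have "U_N N \<in> W0 \<delta>" unfolding UN_eq by (rule SB_gen) (rule clo, simp)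
      ultimately show "U i `` A \<in> B_of \<tau> (W0 \<delta>)" unfolding B_of_def N_def by simp
    qed
  next
    assume hB: "\<forall>i\<in>I. \<forall>A. U i `` A \<in> B_of \<tau> (W0 \<delta>)"
    have HU: "\<forall>A'. \<not> \<delta> A' (- (U i `` A'))" if i: "i \<in> I" for i
    proof
      fix A'
      define N where "N = U i `` A'"
      have "U_N N \<in> W0 \<delta>" using hB i unfolding N_def B_of_def by blast
      moreover have "U_N N `` N \<inter> - N = {}" unfolding U_N_def by auto
      ultimately have "\<not> qprox_of (W0 \<delta>) N (- N)" unfolding qprox_of_def by blast
      then have nd: "\<not> \<delta> N (- N)" using Wqp by simp
      have "A' \<subseteq> N" unfolding N_def using assms(6) i by auto
      then show "\<not> \<delta> A' (- (U i `` A'))" using nd qp_mono_l[OF qp] unfolding N_def by blast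
    qed
    have Id: "\<forall>s\<in>W0 \<delta> \<union> U ` I. Id \<subseteq> s"
    proof
      fix s assume "s \<in> W0 \<delta> \<union> U ` I"
      then show "Id \<subseteq> s"
      proof
        assume "s \<in> W0 \<delta>" then show ?thesis using Wqu unfolding quasi_uniformity_def by simp
      next
        assume "s \<in> U ` I" then show ?thesis using assms(6) by auto
      qed
    qed
    have sq: "\<forall>s\<in>W0 \<delta> \<union> U ` I. \<exists>w\<in>V. w O w \<subseteq> s"
    proof
      fix s assume s: "s \<in> W0 \<delta> \<union> U ` I"
      show "\<exists>w\<in>V. w O w \<subseteq> s"
      proof (cases "s \<in> W0 \<delta>")
        case True
        then obtain w where w: "w \<in> W0 \<delta>" "trans w" "w \<subseteq> s"
          using assms(4) unfolding Weq transitive_qu_def by blast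
        have "w O w \<subseteq> w" using w(2) by (rule trans_O_subset)
        then show ?thesis using w WV by blast
      next
        case False
        then obtain i where i: "i \<in> I" "s = U i" using s by blast
        have "U i O U i \<subseteq> U i" using assms(6) i(1) trans_O_subset by blast
        then show ?thesis using UV[OF i(1)] i(2) by blast
      qed
    qed
    have Vqu: "quasi_uniformity V"
      unfolding quasi_uniformity_def
    proof (intro conjI ballI)
      show "is_filter V" by (rule Vfil)
    next
      fix W assume "W \<in> V" then show "Id \<subseteq> W" unfolding V_def by (rule gf_Id[OF Id])
    next
      fix W assume "W \<in> V" then show "\<exists>Wa\<in>V. Wa O Wa \<subseteq> W"
        unfolding V_def by (rule gf_sqrt[OF sq[unfolded V_def]])
    qed
    have "qprox_of V A B = \<delta> A B" for A B
    proof
      assume "qprox_of V A B"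
      then have "qprox_of (W0 \<delta>) A B" using WV unfolding qprox_of_def by blast
      then show "\<delta> A B" using Wqp by simp
    next
      assume d: "\<delta> A B"
      show "qprox_of V A B" unfolding qprox_of_def
      proof (intro ballI notI)
        fix U' assume U': "U' \<in> V" and E: "U' `` A \<inter> B = {}"
        obtain F where F: "finite F" "F \<subseteq> W0 \<delta> \<union> U ` I" "\<Inter>F \<subseteq> U'"
          using U' unfolding V_def by (rule gfE)
        define F1 where "F1 = F \<inter> W0 \<delta>"
        define F2 where "F2 = F - W0 \<delta>"
        have fF1: "finite F1" unfolding F1_def using F(1) by simp
        have "\<forall>k\<in>F1. k \<in> W0 \<delta>" unfolding F1_def by simp
        then have "(\<Inter>k\<in>F1. k) \<in> W0 \<delta>" by (rule filter_Inter[OF Wfil fF1])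
        then have "\<Inter>F1 \<in> W0 \<delta>" by simp
        then obtain P where P: "finite P" "\<forall>p\<in>P. \<not> \<delta> (fst p) (snd p)"
          "(\<Inter>p\<in>P. Upair (fst p) (snd p)) \<subseteq> \<Inter>F1" by (rule W0E)
        have F2U: "F2 \<subseteq> U ` I" "finite F2" unfolding F2_def using F(1,2) by auto
        have "\<exists>R. R = \<Inter>F2 \<and> (\<forall>A'. \<not> \<delta> A' (- (R `` A')))"
        proof (cases "F2 = {}")
          case True then show ?thesis using H_UNIV[OF qp] by simp
        next
          case False
          obtain K where K: "K \<subseteq> I" "finite K" "F2 = U ` K"
            using F2U by (meson finite_subset_image)
          then have "K \<noteq> {}" using False by auto
          then obtain k where k: "k \<in> I" "U k = (\<Inter>i\<in>K. U i)"
            using U_inter_closed[OF K(2) _ K(1) assms(7)] by blast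
          have "\<Inter>F2 = U k" using k K(3) by simp
          then show ?thesis using HU[OF k(1)] by metis
        qed
        then obtain R where R: "R = \<Inter>F2" "\<forall>A'. \<not> \<delta> A' (- (R `` A'))" by blast
        have "F = F1 \<union> F2" unfolding F1_def F2_def by blast
        then have "\<Inter>F = \<Inter>F1 \<inter> \<Inter>F2" by (simp add: Inter_Un_distrib)
        moreover have "(\<Inter>p\<in>P. Upair (fst p) (snd p)) \<inter> R \<subseteq> \<Inter>F1 \<inter> \<Inter>F2"
          using P(3) R(1) by (intro Int_mono) auto
        ultimately have "(\<Inter>p\<in>P. Upair (fst p) (snd p)) \<inter> R \<subseteq> \<Inter>F" by simp
        then have "(\<Inter>p\<in>P. Upair (fst p) (snd p)) \<inter> R \<subseteq> U'" using F(3) by (rule order_trans)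
        then have "((\<Inter>p\<in>P. Upair (fst p) (snd p)) \<inter> R) `` A \<subseteq> U' `` A" by (rule Image_mono) simp
        then have "((\<Inter>p\<in>P. Upair (fst p) (snd p)) \<inter> R) `` A \<inter> B = {}" using E by blast
        then have "\<not> \<delta> A B" by (rule keyL[OF qp P(1,2) R(2)])
        with d show False by simp
      qed
    qed
    then have "qprox_of V = \<delta>" by (intro ext) simp
    then show "V \<in> pi_class \<delta>" using Vqu unfolding pi_class_def by simp
  qed
qed

end
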